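(* Let $n\ge 2$ and $t\ge 0$ be integers, and let $a_1,\dots,a_t$ be integers with $1<a_1<\cdots<a_t<n$ and $\gcd(a_j,2n)=1$ for $1\le j\le t$. Then for any edge $e$ of $C_{2n}(1,a_1,\dots,a_t)$, the graph $C_{2n}(1,a_1,\dots,a_t)-e$ obtained by deleting $e$ satisfies $\chi_{la}(C_{2n}(1,a_1,\dots,a_t)-e)=3$.
   Context: For an integer $m\ge 3$ and integers $s_1,\dots,s_k$, the circulant graph $C_m(s_1,\dots,s_k)$ is the simple graph with vertex set $\mathbb Z_m$ in which distinct vertices $u,v$ are adjacent if and only if $u-v\equiv \pm s_i\pmod m$ for some $i$. For a connected graph $G=(V,E)$ with $q=|E|$, a local antimagic labeling is a bijection $f:E\to\{1,\dots,q\}$ such that adjacent vertices $x,y$ satisfy $f^+(x)\ne f^+(y)$, where $f^+(x)=\sum f(e)$ over edges $e$ incident to $x$; $\chi_{la}(G)$ is the minimum number of distinct values of $f^+$ over all local antimagic labelings $f$ of $G$. *)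

theory Defs
  imports Main "HOL-Number_Theory.Cong"
begin

definition circulant_edges :: "nat \<Rightarrow> int list \<Rightarrow> nat set set" where
  "circulant_edges m S = {{u, v} | u v. u < m \<and> v < m \<and> u \<noteq> v \<and>
      (\<exists>s\<in>set S. [int u - int v = s] (mod int m) \<or> [int u - int v = - s] (mod int m))}"

definition vertex_sum :: "nat set set \<Rightarrow> (nat set \<Rightarrow> nat) \<Rightarrow> nat \<Rightarrow> nat" where
  "vertex_sum E f x = (\<Sum>e\<in>{e\<in>E. x \<in> e}. f e)"

definition local_antimagic :: "nat set set \<Rightarrow> (nat set \<Rightarrow> nat) \<Rightarrow> bool" where
  "local_antimagic E f \<longleftrightarrow> bij_betw f E {1..card E} \<and>
     (\<forall>x y. {x, y} \<in> E \<longrightarrow> x \<noteq> y \<longrightarrow> vertex_sum E f x \<noteq> vertex_sum E f y)"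

definition chi_la :: "nat set \<Rightarrow> nat set set \<Rightarrow> nat" where
  "chi_la V E = Inf {card (vertex_sum E f ` V) | f. local_antimagic E f}"

end

theory Submission
  imports Defs
begin


lemma even_mod_evenI: fixes a b :: int assumes "even b" shows "even (a mod b) = even a"
proof -
  have "a mod b mod 2 = a mod 2" using assms by (simp add: mod_mod_cancel)
  thus ?thesis by (simp add: even_iff_mod_2_eq_zero)
qed

lemma mod_eq_small: fixes a b m :: int
  assumes "0 \<le> a" "a < m" "0 \<le> b" "b < m" "a mod m = b mod m" shows "a = b"
  using assms by simp

lemma dvd_small0: fixes d m :: int assumes "m dvd d" "\<bar>d\<bar> < m" shows "d = 0"
proof (rule ccontr)
  assume "d \<noteq> 0"
  then have "\<bar>m\<bar> \<le> \<bar>d\<bar>" using dvd_imp_le_int assms(1) by blast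
  then show False using assms(2) by linarith
qed

lemma cong_pm_unique: fixes a b n sa sb :: int
  assumes "0 < a" "a < n" "0 < b" "b < n" "sa = 1 \<or> sa = -1" "sb = 1 \<or> sb = -1"
   "(sa * a) mod (2*n) = (sb * b) mod (2*n)"
  shows "a = b \<and> sa = sb"
proof -
  have d: "2*n dvd sa*a - sb*b" using assms(7) by (simp add: mod_eq_dvd_iff)
  from assms(5,6) consider "sa = 1" "sb = 1" | "sa = 1" "sb = -1" | "sa = -1" "sb = 1" | "sa = -1" "sb = -1"
    by blast
  then show ?thesis
  proof cases
    case 1
    then have "2*n dvd a - b" using d by simp
    then have "a - b = 0" by (rule dvd_small0) (use assms in linarith)
    then show ?thesis using 1 by simp
  next
    case 2
    then have "2*n dvd a + b" using d by simp
    then have "a + b = 0" by (rule dvd_small0) (use assms in linarith)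
    then show ?thesis using assms by linarith
  next
    case 3
    then have "2*n dvd -(a + b)" using d by (simp add: algebra_simps)
    then have "2*n dvd a + b" by (simp only: dvd_minus_iff)
    then have "a + b = 0" by (rule dvd_small0) (use assms in linarith)
    then show ?thesis using assms by linarith
  next
    case 4
    then have "2*n dvd -(a - b)" using d by (simp add: algebra_simps)
    then have "2*n dvd a - b" by (simp only: dvd_minus_iff)
    then have "a - b = 0" by (rule dvd_small0) (use assms in linarith)
    then show ?thesis using 4 by simp
  qed
qed

lemma half_mod: fixes z :: int and h n :: nat
  assumes "even z" "h < n"
  shows "(2 * int h) mod (2 * int n) = z mod (2 * int n) \<longleftrightarrow> h = nat ((z mod (2 * int n)) div 2)"
proof -
  have e: "even (z mod (2 * int n))" using assms(1) even_mod_evenI[of "2*int n" z] by simp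
  have "(2 * int h) mod (2 * int n) = 2 * int h" using assms(2) by simp
  moreover have "0 \<le> z mod (2 * int n)" using assms(2) by simp
  ultimately show ?thesis using e by (auto elim!: evenE)
qed


lemma Dform: fixes z t n :: int
  assumes "0 \<le> z" "z < 2*n" "even z" "0 < t" "t < n"
  shows "z div 2 - ((z + 2*t) mod (2*n)) div 2 = - t \<or> z div 2 - ((z + 2*t) mod (2*n)) div 2 = n - t"
proof (cases "z + 2*t < 2*n")
  case True
  then have "(z + 2*t) mod (2*n) = z + 2*t" using assms by (intro mod_pos_pos_trivial) auto
  then show ?thesis using assms(3) by (auto elim!: evenE)
next
  case False
  have "(z + 2*t) mod (2*n) = (z + 2*t - 2*n) mod (2*n)" by (simp add: mod_diff_right_eq[symmetric])
  also have "\<dots> = z + 2*t - 2*n" using assms False by (intro mod_pos_pos_trivial) auto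
  finally show ?thesis using assms(3) by (auto elim!: evenE)
qed

locale lconstr =
  fixes n r :: nat and g eps :: "nat \<Rightarrow> int" and w :: int
  assumes n2: "n \<ge> 2" and r1: "r \<ge> 1"
    and gpos: "\<And>i. i < r \<Longrightarrow> 0 < g i \<and> g i < int n \<and> odd (g i)"
    and ginj: "inj_on g {..<r}"
    and eps: "\<And>i. eps i = 1 \<or> eps i = -1"
    and Tnd: "\<not> int n dvd (\<Sum>i<r. eps i * g i)"
    and wodd: "odd w"
begin

definition NN :: int where "NN = 2 * int n"
definition tau where "tau i = eps i * g i"
definition T where "T = (\<Sum>i<r. tau i)"
definition P where "P j = (\<Sum>i<j. tau i)"
definition rho where "rho j = w - 2 * P j"
definition XX where "XX j h = (rho j - tau j + 2 * int h) mod NN"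
definition YA where "YA j h = (rho j + 2 * int h) mod NN"
definition YD where "YD j h = (rho j - 2 * tau j + 2 * int h) mod NN"
definition psi :: "nat \<times> nat \<times> bool \<Rightarrow> nat set" where
  "psi = (\<lambda>(j,h,k). {nat (XX j h), nat (if k then YA j h else YD j h)})"
definition lab :: "nat \<times> nat \<times> bool \<Rightarrow> nat" where
  "lab = (\<lambda>(j,h,k). 2*n*j + (if k then h else 2*n - 1 - h))"
definition II :: "(nat \<times> nat \<times> bool) set" where "II = {..<r} \<times> {..<n} \<times> (UNIV::bool set)"
definition EG :: "nat set set" where
  "EG = {{u, v} | u v. u < 2*n \<and> v < 2*n \<and> u \<noteq> v \<and>
     (\<exists>i<r. [int u - int v = g i] (mod int (2*n)) \<or> [int u - int v = - g i] (mod int (2*n)))}"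

lemma NN_pos: "NN > 0" and NN_even: "even NN" using n2 by (auto simp: NN_def)

lemma tau_odd: "i < r \<Longrightarrow> odd (tau i)"
  using gpos[of i] eps[of i] by (auto simp: tau_def)

lemma rho_odd: "odd (rho j)"
  using wodd by (simp add: rho_def)

lemma rho_Suc: "rho (Suc j) = rho j - 2 * tau j"
  by (simp add: rho_def P_def algebra_simps)

lemma XX_props: "j < r \<Longrightarrow> even (XX j h) \<and> 0 \<le> XX j h \<and> XX j h < NN"
  using tau_odd[of j] rho_odd[of j] NN_pos NN_even
  by (simp add: XX_def even_mod_evenI)

lemma YA_props: "odd (YA j h) \<and> 0 \<le> YA j h \<and> YA j h < NN"
  using rho_odd[of j] NN_pos NN_even
  by (simp add: YA_def even_mod_evenI)

lemma YD_props: "odd (YD j h) \<and> 0 \<le> YD j h \<and> YD j h < NN"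
  using rho_odd[of j] NN_pos NN_even
  by (simp add: YD_def even_mod_evenI)


lemma diff_YA: "(YA j h - XX j h) mod NN = tau j mod NN"
proof -
  have "(YA j h - XX j h) mod NN = ((rho j + 2 * int h) - (rho j - tau j + 2 * int h)) mod NN"
    unfolding YA_def XX_def by (simp add: mod_diff_eq)
  then show ?thesis by simp
qed

lemma diff_YD: "(YD j h - XX j h) mod NN = (- tau j) mod NN"
proof -
  have "(YD j h - XX j h) mod NN = ((rho j - 2 * tau j + 2 * int h) - (rho j - tau j + 2 * int h)) mod NN"
    unfolding YD_def XX_def by (simp add: mod_diff_eq)
  then show ?thesis by simp
qed

lemma mem_EG:
  assumes "u < 2*n" "v < 2*n" "u \<noteq> v" "i < r"
    "(int u - int v) mod NN = g i mod NN \<or> (int u - int v) mod NN = (- g i) mod NN"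
  shows "{u, v} \<in> EG"
proof -
  have "[int u - int v = g i] (mod int (2*n)) \<or> [int u - int v = - g i] (mod int (2*n))"
    using assms(5) by (simp add: cong_def NN_def)
  then show ?thesis unfolding EG_def using assms(1-4) by blast
qed

lemma psi_in: assumes "x \<in> II" shows "psi x \<in> EG"
proof -
  obtain j h k where x: "x = (j,h,k)" by (cases x) auto
  have j: "j < r" and h: "h < n" using assms x by (auto simp: II_def)
  define Y where "Y = (if k then YA j h else YD j h)"
  have X: "even (XX j h)" "0 \<le> XX j h" "XX j h < NN" using XX_props[OF j] by auto
  have Yp: "odd Y" "0 \<le> Y" "Y < NN" using YA_props[of j h] YD_props[of j h] by (auto simp: Y_def)
  have "(Y - XX j h) mod NN = (if k then tau j else - tau j) mod NN"
    using diff_YA diff_YD by (simp add: Y_def)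
  then have "(XX j h - Y) mod NN = (if k then - tau j else tau j) mod NN"
    by (smt (verit) mod_minus_eq)
  then have "(int (nat (XX j h)) - int (nat Y)) mod NN = g j mod NN \<or>
       (int (nat (XX j h)) - int (nat Y)) mod NN = (- g j) mod NN"
    using X Yp eps[of j] by (auto simp: tau_def)
  moreover have "nat (XX j h) \<noteq> nat Y" using X Yp by (metis nat_eq_iff2)
  moreover have "nat (XX j h) < 2*n" "nat Y < 2*n" using X Yp by (auto simp: NN_def)
  ultimately have "{nat (XX j h), nat Y} \<in> EG" using mem_EG j by blast
  then show ?thesis by (simp add: psi_def x Y_def)
qed


lemma doubleton_parity: fixes a b c d :: nat
  assumes "{a, b} = {c, d}" "even a" "odd b" "even c" "odd d" shows "a = c \<and> b = d"
  using assms by (auto simp: doubleton_eq_iff)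

lemma psi_inj: "inj_on psi II"
proof (rule inj_onI)
  fix x1 x2 assume x1: "x1 \<in> II" and x2: "x2 \<in> II" and eq: "psi x1 = psi x2"
  obtain j1 h1 k1 where x1e: "x1 = (j1,h1,k1)" by (cases x1) auto
  obtain j2 h2 k2 where x2e: "x2 = (j2,h2,k2)" by (cases x2) auto
  have j1: "j1 < r" and h1: "h1 < n" using x1 x1e by (auto simp: II_def)
  have j2: "j2 < r" and h2: "h2 < n" using x2 x2e by (auto simp: II_def)
  define Y1 where "Y1 = (if k1 then YA j1 h1 else YD j1 h1)"
  define Y2 where "Y2 = (if k2 then YA j2 h2 else YD j2 h2)"
  have X1: "even (XX j1 h1)" "0 \<le> XX j1 h1" using XX_props[OF j1] by auto
  have X2: "even (XX j2 h2)" "0 \<le> XX j2 h2" using XX_props[OF j2] by auto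
  have Y1p: "odd Y1" "0 \<le> Y1" using YA_props[of j1 h1] YD_props[of j1 h1] by (auto simp: Y1_def)
  have Y2p: "odd Y2" "0 \<le> Y2" using YA_props[of j2 h2] YD_props[of j2 h2] by (auto simp: Y2_def)
  have "{nat (XX j1 h1), nat Y1} = {nat (XX j2 h2), nat Y2}"
    using eq by (simp add: psi_def x1e x2e Y1_def Y2_def)
  moreover have "even (nat (XX j1 h1))" "even (nat (XX j2 h2))" "odd (nat Y1)" "odd (nat Y2)"
    using X1 X2 Y1p Y2p by (auto simp: even_nat_iff)
  ultimately have "nat (XX j1 h1) = nat (XX j2 h2) \<and> nat Y1 = nat Y2"
    using doubleton_parity by blast
  then have XE: "XX j1 h1 = XX j2 h2" and YE: "Y1 = Y2" using X1 X2 Y1p Y2p by auto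
  define s1 where "s1 = (if k1 then 1 else -1) * eps j1"
  define s2 where "s2 = (if k2 then 1 else -1) * eps j2"
  have "(Y1 - XX j1 h1) mod NN = (s1 * g j1) mod NN"
    using diff_YA diff_YD by (simp add: Y1_def s1_def tau_def)
  moreover have "(Y2 - XX j2 h2) mod NN = (s2 * g j2) mod NN"
    using diff_YA diff_YD by (simp add: Y2_def s2_def tau_def)
  ultimately have "(s1 * g j1) mod (2 * int n) = (s2 * g j2) mod (2 * int n)"
    using XE YE by (simp add: NN_def)
  moreover have "s1 = 1 \<or> s1 = -1" "s2 = 1 \<or> s2 = -1" using eps[of j1] eps[of j2]
    by (auto simp: s1_def s2_def)
  ultimately have "g j1 = g j2 \<and> s1 = s2"
    using cong_pm_unique[of "g j1" "int n" "g j2" s1 s2] gpos[OF j1] gpos[OF j2] by blast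
  then have jj: "j1 = j2" and ss: "s1 = s2" using ginj j1 j2 by (auto dest: inj_onD)
  have kk: "k1 = k2" using ss jj eps[of j2] by (auto simp: s1_def s2_def split: if_splits)
  have "(2 * int h1) mod NN = (2 * int h2) mod NN"
  proof -
    have "NN dvd (rho j1 - tau j1 + 2 * int h1) - (rho j1 - tau j1 + 2 * int h2)"
      using XE jj by (simp add: XX_def mod_eq_dvd_iff)
    then show ?thesis by (simp add: mod_eq_dvd_iff)
  qed
  then have "h1 = h2" using h1 h2 by (simp add: NN_def)
  then show "x1 = x2" using x1e x2e jj kk by simp
qed


lemma two_half: fixes z :: int assumes "even z" shows "2 * int (nat ((z mod NN) div 2)) = z mod NN"
proof -
  have "even (z mod NN)" using assms NN_even by (simp add: even_mod_evenI)
  moreover have "0 \<le> z mod NN" using NN_pos by simp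
  ultimately show ?thesis by (auto elim!: evenE)
qed

lemma half_lt: fixes z :: int shows "nat ((z mod NN) div 2) < n"
proof -
  have a: "z mod NN < 2 * int n" using NN_pos by (simp add: NN_def)
  have b: "(z mod NN) div 2 * 2 + (z mod NN) mod 2 = z mod NN" by (rule div_mult_mod_eq)
  have c: "0 \<le> (z mod NN) mod 2" by simp
  have "(z mod NN) div 2 < int n" using a b c by linarith
  moreover have "0 \<le> (z mod NN) div 2" using NN_pos by simp
  ultimately show ?thesis by (simp add: nat_less_iff)
qed

lemma surj_aux:
  assumes "x < 2*n" "y < 2*n" "even x" "odd y" "i < r" "s = 1 \<or> s = -1"
    "(int y - int x) mod NN = (s * g i) mod NN"
  shows "{x, y} \<in> psi ` II"
proof -
  define kap where "kap = s * eps i"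
  have sg: "s * g i = kap * tau i" using eps[of i] assms(6) by (auto simp: kap_def tau_def)
  have xm: "int x mod NN = int x" "int y mod NN = int y" using assms(1,2) by (auto simp: NN_def)
  have dv: "NN dvd (int y - int x) - kap * tau i" using assms(7) sg by (simp add: mod_eq_dvd_iff)
  have tau_odd': "odd (tau i)" using tau_odd[OF assms(5)] .
  show ?thesis
  proof (cases "kap = 1")
    case True
    define h where "h = nat (((int y - rho i) mod NN) div 2)"
    have ev: "even (int y - rho i)" using assms(4) rho_odd[of i] by simp
    have h2: "2 * int h = (int y - rho i) mod NN" unfolding h_def by (rule two_half[OF ev])
    have "YA i h = (rho i + (int y - rho i) mod NN) mod NN" by (simp add: YA_def h2)
    also have "\<dots> = int y mod NN" by (simp add: mod_add_right_eq)
    finally have ya: "YA i h = int y" using xm by simp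
    have "XX i h = (rho i - tau i + (int y - rho i) mod NN) mod NN" by (simp add: XX_def h2)
    also have "\<dots> = (int y - tau i) mod NN" by (simp add: mod_add_right_eq)
    also have "\<dots> = int x mod NN"
    proof -
      have "(int y - tau i) - int x = (int y - int x) - kap * tau i" using True by simp
      then show ?thesis using dv by (simp only: mod_eq_dvd_iff)
    qed
    finally have xx: "XX i h = int x" using xm by simp
    have "(i, h, True) \<in> II" using assms(5) half_lt by (simp add: II_def h_def)
    moreover have "psi (i, h, True) = {x, y}" by (simp add: psi_def xx ya)
    ultimately show ?thesis by (metis image_eqI)
  next
    case False
    then have km: "kap = -1" using eps[of i] assms(6) by (auto simp: kap_def)
    define h where "h = nat (((int x - rho i + tau i) mod NN) div 2)"
    have ev: "even (int x - rho i + tau i)" using assms(3) rho_odd[of i] tau_odd' by simp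
    have h2: "2 * int h = (int x - rho i + tau i) mod NN" unfolding h_def by (rule two_half[OF ev])
    have "XX i h = (rho i - tau i + (int x - rho i + tau i) mod NN) mod NN" by (simp add: XX_def h2)
    also have "\<dots> = int x mod NN" by (simp add: mod_add_right_eq)
    finally have xx: "XX i h = int x" using xm by simp
    have "YD i h = (rho i - 2 * tau i + (int x - rho i + tau i) mod NN) mod NN" by (simp add: YD_def h2)
    also have "\<dots> = (int x - tau i) mod NN" by (simp add: mod_add_right_eq)
    also have "\<dots> = int y mod NN"
    proof -
      have "(int x - tau i) - int y = - ((int y - int x) - kap * tau i)" using km by simp
      then show ?thesis using dv by (simp only: mod_eq_dvd_iff dvd_minus_iff)
    qed
    finally have yd: "YD i h = int y" using xm by simp
    have "(i, h, False) \<in> II" using assms(5) half_lt by (simp add: II_def h_def)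
    moreover have "psi (i, h, False) = {x, y}" by (simp add: psi_def xx yd)
    ultimately show ?thesis by (metis image_eqI)
  qed
qed

lemma psi_surj: "EG \<subseteq> psi ` II"
proof
  fix E assume "E \<in> EG"
  then obtain u v i where E: "E = {u, v}" and uv: "u < 2*n" "v < 2*n" "u \<noteq> v" and i: "i < r"
    and c: "(int u - int v) mod NN = g i mod NN \<or> (int u - int v) mod NN = (- g i) mod NN"
    unfolding EG_def by (auto simp: cong_def NN_def)
  obtain s where s: "s = 1 \<or> s = -1" "(int u - int v) mod NN = (s * g i) mod NN"
    using c by (metis mult_1 mult_minus1)
  have "odd (int u - int v)"
  proof -
    have "odd ((s * g i) mod NN)" using gpos[OF i] s(1) NN_even by (auto simp: even_mod_evenI)
    then have "odd ((int u - int v) mod NN)" using s(2) by simp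
    then show ?thesis using NN_even by (simp add: even_mod_evenI)
  qed
  then have par: "even u \<longleftrightarrow> odd v" by simp
  show "E \<in> psi ` II"
  proof (cases "even u")
    case True
    have "(int v - int u) mod NN = ((- s) * g i) mod NN"
      using s(2) by (smt (verit) mod_minus_eq mult_minus_left)
    moreover have "- s = 1 \<or> - s = -1" using s(1) by auto
    ultimately have "{u, v} \<in> psi ` II" using surj_aux[of u v i "- s"] uv i True par by blast
    then show ?thesis using E by simp
  next
    case False
    have "{v, u} \<in> psi ` II" using surj_aux[of v u i s] uv i False par s by blast
    then show ?thesis using E by (simp add: insert_commute)
  qed
qed

lemma psi_bij: "bij_betw psi II EG"
  using psi_inj psi_in psi_surj by (auto simp: bij_betw_def)


lemma divmod_unique: fixes N j1 j2 m1 m2 :: nat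
  assumes "m1 < N" "m2 < N" "N*j1 + m1 = N*j2 + m2" shows "j1 = j2 \<and> m1 = m2"
proof -
  have "(N*j1 + m1) div N = (N*j2 + m2) div N" using assms(3) by simp
  then have "j1 = j2" using assms(1,2) by simp
  then show ?thesis using assms(3) by simp
qed

lemma lab_inj: "inj_on lab II"
proof (rule inj_onI)
  fix x1 x2 assume x1: "x1 \<in> II" and x2: "x2 \<in> II" and eq: "lab x1 = lab x2"
  obtain j1 h1 k1 where x1e: "x1 = (j1,h1,k1)" by (cases x1) auto
  obtain j2 h2 k2 where x2e: "x2 = (j2,h2,k2)" by (cases x2) auto
  have h1: "h1 < n" and h2: "h2 < n" using x1 x1e x2 x2e by (auto simp: II_def)
  define m1 where "m1 = (if k1 then h1 else 2*n - 1 - h1)"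
  define m2 where "m2 = (if k2 then h2 else 2*n - 1 - h2)"
  have "m1 < 2*n" "m2 < 2*n" using h1 h2 by (auto simp: m1_def m2_def)
  moreover have "2*n*j1 + m1 = 2*n*j2 + m2" using eq by (simp add: lab_def x1e x2e m1_def m2_def)
  ultimately have jj: "j1 = j2" and mm: "m1 = m2" using divmod_unique by blast+
  have "k1 = k2 \<and> h1 = h2" using mm h1 h2 by (auto simp: m1_def m2_def split: if_splits)
  then show "x1 = x2" using jj x1e x2e by simp
qed

lemma lab_bij: "bij_betw lab II {..<2*n*r}"
proof -
  have sub: "lab ` II \<subseteq> {..<2*n*r}"
  proof
    fix l assume "l \<in> lab ` II"
    then obtain j h k where "(j,h,k) \<in> II" "l = lab (j,h,k)" by auto
    then have j: "j < r" and h: "h < n" and l: "l = 2*n*j + (if k then h else 2*n - 1 - h)"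
      by (auto simp: II_def lab_def)
    have "(if k then h else 2*n - 1 - h) < 2*n" using h by auto
    then have "l < 2*n*j + 2*n" using l by linarith
    also have "\<dots> = 2*n*(Suc j)" by simp
    also have "\<dots> \<le> 2*n*r" using j by (intro mult_le_mono2) simp
    finally show "l \<in> {..<2*n*r}" by simp
  qed
  have cII: "card II = 2*n*r" by (simp add: II_def card_cartesian_product)
  have "card (lab ` II) = 2*n*r" using lab_inj cII by (simp add: card_image)
  then have "lab ` II = {..<2*n*r}" using sub by (intro card_subset_eq) auto
  then show ?thesis using lab_inj by (simp add: bij_betw_def)
qed

lemma finite_II: "finite II" by (simp add: II_def)


definition hX where "hX j x = nat (((int x - rho j + tau j) mod NN) div 2)"
definition hY where "hY j x = nat (((int x - rho j) mod NN) div 2)"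
definition Aconst :: nat where "Aconst = (\<Sum>j<r. 4*n*j + 2*n - 1)"

lemma solve_h: fixes a :: int and x h :: nat
  assumes "x < 2*n" "h < n" "even (int x - a)"
  shows "(int x = (a + 2 * int h) mod NN) \<longleftrightarrow> h = nat (((int x - a) mod NN) div 2)"
proof -
  have xm: "int x mod NN = int x" using assms(1) by (simp add: NN_def)
  have "(int x = (a + 2 * int h) mod NN) \<longleftrightarrow> int x mod NN = (a + 2 * int h) mod NN" using xm by simp
  also have "\<dots> \<longleftrightarrow> NN dvd int x - (a + 2 * int h)" by (simp add: mod_eq_dvd_iff)
  also have "\<dots> \<longleftrightarrow> NN dvd - (2 * int h - (int x - a))" by (simp add: algebra_simps)
  also have "\<dots> \<longleftrightarrow> NN dvd (2 * int h - (int x - a))" by (simp only: dvd_minus_iff)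
  also have "\<dots> \<longleftrightarrow> (2 * int h) mod NN = (int x - a) mod NN" by (simp add: mod_eq_dvd_iff)
  also have "\<dots> \<longleftrightarrow> h = nat (((int x - a) mod NN) div 2)"
    unfolding NN_def by (rule half_mod[OF assms(3,2)])
  finally show ?thesis .
qed

lemma nat_eq_int: fixes X :: int assumes "0 \<le> X" shows "(x = nat X) \<longleftrightarrow> (int x = X)"
  using assms by auto

lemma mem_asc: assumes "j < r" "h < n" "x < 2*n"
  shows "x \<in> psi (j,h,True) \<longleftrightarrow> (if even x then h = hX j x else h = hY j x)"
proof -
  have X: "even (XX j h)" "0 \<le> XX j h" using XX_props[OF assms(1)] by auto
  have Y: "odd (YA j h)" "0 \<le> YA j h" using YA_props[of j h] by auto
  have m: "x \<in> psi (j,h,True) \<longleftrightarrow> int x = XX j h \<or> int x = YA j h"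
    using X Y by (auto simp: psi_def)
  show ?thesis
  proof (cases "even x")
    case True
    have "int x \<noteq> YA j h"
    proof
      assume "int x = YA j h"
      then have "odd (int x)" using Y by simp
      then show False using True by simp
    qed
    moreover have "int x = XX j h \<longleftrightarrow> h = hX j x"
      unfolding XX_def hX_def
      using solve_h[of x h "rho j - tau j"] assms True rho_odd[of j] tau_odd[OF assms(1)]
      by (simp add: algebra_simps)
    ultimately show ?thesis using m True by simp
  next
    case False
    have "int x \<noteq> XX j h"
    proof
      assume "int x = XX j h"
      then have "even (int x)" using X by simp
      then show False using False by simp
    qed
    moreover have "int x = YA j h \<longleftrightarrow> h = hY j x"
      unfolding YA_def hY_def
      using solve_h[of x h "rho j"] assms False rho_odd[of j] by simp
    ultimately show ?thesis using m False by simp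
  qed
qed

lemma mem_desc: assumes "j < r" "h < n" "x < 2*n"
  shows "x \<in> psi (j,h,False) \<longleftrightarrow> (if even x then h = hX j x else h = hY (Suc j) x)"
proof -
  have X: "even (XX j h)" "0 \<le> XX j h" using XX_props[OF assms(1)] by auto
  have Y: "odd (YD j h)" "0 \<le> YD j h" using YD_props[of j h] by auto
  have m: "x \<in> psi (j,h,False) \<longleftrightarrow> int x = XX j h \<or> int x = YD j h"
    using X Y by (auto simp: psi_def)
  show ?thesis
  proof (cases "even x")
    case True
    have "int x \<noteq> YD j h"
    proof
      assume "int x = YD j h"
      then have "odd (int x)" using Y by simp
      then show False using True by simp
    qed
    moreover have "int x = XX j h \<longleftrightarrow> h = hX j x"
      unfolding XX_def hX_def
      using solve_h[of x h "rho j - tau j"] assms True rho_odd[of j] tau_odd[OF assms(1)]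
      by (simp add: algebra_simps)
    ultimately show ?thesis using m True by simp
  next
    case False
    have "int x \<noteq> XX j h"
    proof
      assume "int x = XX j h"
      then have "even (int x)" using X by simp
      then show False using False by simp
    qed
    moreover have "int x = YD j h \<longleftrightarrow> h = hY (Suc j) x"
      unfolding YD_def hY_def rho_Suc
      using solve_h[of x h "rho j - 2 * tau j"] assms False rho_odd[of j] by simp
    ultimately show ?thesis using m False by simp
  qed
qed

lemma hX_lt: "hX j x < n" unfolding hX_def by (rule half_lt)
lemma hY_lt: "hY j x < n" unfolding hY_def by (rule half_lt)

lemma sum_II: "(\<Sum>i\<in>II. F i) = (\<Sum>j<r. \<Sum>h<n. F (j,h,True) + F (j,h,False))"
proof -
  have "(\<Sum>i\<in>II. F i) = (\<Sum>j<r. \<Sum>p\<in>{..<n} \<times> (UNIV::bool set). F (j, p))"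
    unfolding II_def by (simp add: sum.cartesian_product)
  also have "\<dots> = (\<Sum>j<r. \<Sum>h<n. \<Sum>k\<in>(UNIV::bool set). F (j, h, k))"
    by (simp add: sum.cartesian_product)
  also have "\<dots> = (\<Sum>j<r. \<Sum>h<n. F (j,h,True) + F (j,h,False))"
    by (simp add: UNIV_bool add.commute)
  finally show ?thesis .
qed

lemma vsum: assumes "x < 2*n"
  shows "int (\<Sum>i\<in>{i\<in>II. x \<in> psi i}. lab i) =
    int Aconst + (if even x then 0 else int (hY 0 x) - int (hY r x))"
proof -
  have "(\<Sum>i\<in>{i\<in>II. x \<in> psi i}. lab i) = (\<Sum>i\<in>II. if x \<in> psi i then lab i else 0)"
    using finite_II by (simp add: sum.inter_filter)
  also have "\<dots> = (\<Sum>j<r. \<Sum>h<n. (if x \<in> psi (j,h,True) then lab (j,h,True) else 0)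
       + (if x \<in> psi (j,h,False) then lab (j,h,False) else 0))"
    by (rule sum_II)
  also have "\<dots> = (\<Sum>j<r. (if even x then 2*n*j + hX j x + (2*n*j + (2*n - 1 - hX j x))
        else 2*n*j + hY j x + (2*n*j + (2*n - 1 - hY (Suc j) x))))"
  proof (rule sum.cong[OF refl])
    fix j assume j: "j \<in> {..<r}"
    have "(\<Sum>h<n. (if x \<in> psi (j,h,True) then lab (j,h,True) else 0)
       + (if x \<in> psi (j,h,False) then lab (j,h,False) else 0)) =
      (\<Sum>h<n. (if h = (if even x then hX j x else hY j x) then 2*n*j + h else 0)
       + (if h = (if even x then hX j x else hY (Suc j) x) then 2*n*j + (2*n - 1 - h) else 0))"
      using j assms by (intro sum.cong[OF refl]) (simp add: mem_asc mem_desc lab_def)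
    also have "\<dots> = (if even x then 2*n*j + hX j x + (2*n*j + (2*n - 1 - hX j x))
        else 2*n*j + hY j x + (2*n*j + (2*n - 1 - hY (Suc j) x)))"
      using hX_lt[of j x] hY_lt[of j x] hY_lt[of "Suc j" x]
      by (simp add: sum.distrib sum.delta)
    finally show "(\<Sum>h<n. (if x \<in> psi (j,h,True) then lab (j,h,True) else 0)
       + (if x \<in> psi (j,h,False) then lab (j,h,False) else 0)) =
       (if even x then 2*n*j + hX j x + (2*n*j + (2*n - 1 - hX j x))
        else 2*n*j + hY j x + (2*n*j + (2*n - 1 - hY (Suc j) x)))" .
  qed
  finally have eq: "(\<Sum>i\<in>{i\<in>II. x \<in> psi i}. lab i) = (\<Sum>j<r. (if even x then 2*n*j + hX j x + (2*n*j + (2*n - 1 - hX j x))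
        else 2*n*j + hY j x + (2*n*j + (2*n - 1 - hY (Suc j) x))))" .
  have "int (\<Sum>j<r. (if even x then 2*n*j + hX j x + (2*n*j + (2*n - 1 - hX j x))
        else 2*n*j + hY j x + (2*n*j + (2*n - 1 - hY (Suc j) x)))) =
     (\<Sum>j<r. int (4*n*j + 2*n - 1) + (if even x then 0 else int (hY j x) - int (hY (Suc j) x)))"
    unfolding of_nat_sum
  proof (rule sum.cong[OF refl])
    fix j
    have "hX j x \<le> 2*n - 1" "hY (Suc j) x \<le> 2*n - 1" using hX_lt[of j x] hY_lt[of "Suc j" x] by auto
    moreover have "1 \<le> 2 * n" using n2 by simp
    ultimately show "int (if even x then 2*n*j + hX j x + (2*n*j + (2*n - 1 - hX j x))
        else 2*n*j + hY j x + (2*n*j + (2*n - 1 - hY (Suc j) x))) =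
       int (4*n*j + 2*n - 1) + (if even x then 0 else int (hY j x) - int (hY (Suc j) x))"
      by (simp add: of_nat_diff)
  qed
  also have "\<dots> = int Aconst + (if even x then 0 else (\<Sum>j<r. int (hY j x) - int (hY (Suc j) x)))"
    by (simp add: sum.distrib Aconst_def of_nat_sum)
  also have "\<dots> = int Aconst + (if even x then 0 else int (hY 0 x) - int (hY r x))"
    using sum_lessThan_telescope'[of "\<lambda>j. int (hY j x)" r] by simp
  finally show ?thesis using eq by simp
qed


definition tt where "tt = T mod int n"

lemma T_eq: "T = (\<Sum>i<r. eps i * g i)" by (simp add: T_def tau_def)
lemma tt_bounds: "0 < tt \<and> tt < int n"
proof -
  have "T mod int n \<noteq> 0" using Tnd T_eq by (simp add: mod_eq_0_iff_dvd)
  moreover have "0 \<le> T mod int n" "T mod int n < int n" using n2 by auto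
  ultimately show ?thesis by (simp add: tt_def)
qed

lemma rho0: "rho 0 = w" by (simp add: rho_def P_def)
lemma rhor: "rho r = w - 2 * T" by (simp add: rho_def P_def T_def)

lemma hY_r: "(int x - rho r) mod NN = ((int x - w) mod NN + 2 * tt) mod NN"
proof -
  have "(int x - rho r) mod NN = ((int x - w) + 2 * T) mod NN" by (simp add: rhor algebra_simps)
  also have "\<dots> = ((int x - w) mod NN + (2 * T) mod NN) mod NN" by (simp add: mod_add_eq)
  also have "(2 * T) mod NN = 2 * tt" unfolding NN_def tt_def by (rule mult_mod_right[symmetric])
  finally show ?thesis .
qed

lemma D_vals: assumes "odd x"
  shows "int (hY 0 x) - int (hY r x) = - tt \<or> int (hY 0 x) - int (hY r x) = int n - tt"
proof -
  define z where "z = (int x - w) mod NN"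
  have z: "0 \<le> z" "z < 2 * int n" "even z"
    using NN_pos NN_even assms wodd by (auto simp: z_def NN_def even_mod_evenI)
  have h0: "int (hY 0 x) = z div 2" using z by (simp add: hY_def rho0 z_def)
  have q: "0 \<le> ((int x - rho r) mod NN) div 2" using NN_pos by simp
  have "int (hY r x) = ((int x - rho r) mod NN) div 2" using q by (simp add: hY_def)
  also have "\<dots> = ((z + 2*tt) mod NN) div 2" by (simp add: hY_r z_def)
  finally have hr: "int (hY r x) = ((z + 2*tt) mod (2 * int n)) div 2" by (simp add: NN_def)
  show ?thesis using Dform[OF z, of tt] tt_bounds h0 hr by simp
qed

lemma D_att1: "\<exists>x<2*n. odd x \<and> int (hY 0 x) - int (hY r x) = - tt"
proof -
  define x where "x = nat (w mod NN)"
  have xi: "int x = w mod NN" using NN_pos by (simp add: x_def)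
  have "int x < 2 * int n" using xi NN_pos by (simp add: NN_def)
  moreover have "odd (int x)" using xi wodd NN_even by (simp add: even_mod_evenI)
  ultimately have x: "x < 2*n" "odd x" by simp_all
  have "(int x - w) mod NN = 0" using xi by (simp add: mod_diff_left_eq)
  then have "int (hY 0 x) = 0" "int (hY r x) = ((2*tt) mod NN) div 2"
    using NN_pos by (auto simp: hY_def rho0 hY_r)
  moreover have "(2*tt) mod NN = 2*tt" using tt_bounds by (simp add: NN_def)
  ultimately show ?thesis using x by auto
qed

lemma D_att2: "\<exists>x<2*n. odd x \<and> int (hY 0 x) - int (hY r x) = int n - tt"
proof -
  define x where "x = nat ((w - 2*tt) mod NN)"
  have xi: "int x = (w - 2*tt) mod NN" using NN_pos by (simp add: x_def)
  have "int x < 2 * int n" using xi NN_pos by (simp add: NN_def)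
  moreover have "odd (int x)" using xi wodd NN_even by (simp add: even_mod_evenI)
  ultimately have x: "x < 2*n" "odd x" by simp_all
  have zz: "(int x - w) mod NN = (- 2*tt) mod NN" using xi by (simp add: mod_diff_left_eq)
  also have "\<dots> = NN - 2*tt"
  proof -
    have "(- 2*tt) mod NN = (NN - 2*tt) mod NN" unfolding mod_eq_dvd_iff by simp
    also have "\<dots> = NN - 2*tt" using tt_bounds by (intro mod_pos_pos_trivial) (auto simp: NN_def)
    finally show ?thesis .
  qed
  finally have z: "(int x - w) mod NN = NN - 2*tt" .
  have "int (hY 0 x) = (NN - 2*tt) div 2" using z tt_bounds by (simp add: hY_def rho0 NN_def)
  moreover have "int (hY r x) = 0" using z by (simp add: hY_def hY_r)
  moreover have "(NN - 2*tt) div 2 = int n - tt" by (simp add: NN_def)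
  ultimately show ?thesis using x by auto
qed


definition ff :: "nat set \<Rightarrow> nat" where "ff E = lab (the_inv_into II psi E)"
definition e0 where "e0 = psi (0, 0, True)"

lemma ff_psi: "i \<in> II \<Longrightarrow> ff (psi i) = lab i"
  using psi_inj by (simp add: ff_def the_inv_into_f_f)

lemma e0_II: "(0, 0, True) \<in> II" using r1 n2 by (simp add: II_def)
lemma ff_e0: "ff e0 = 0" using ff_psi[OF e0_II] by (simp add: e0_def lab_def)
lemma e0_EG: "e0 \<in> EG" using psi_in[OF e0_II] by (simp add: e0_def)

lemma ff_bij: "bij_betw ff EG {..<2*n*r}"
proof -
  have "bij_betw (the_inv_into II psi) EG II" using psi_bij by (rule bij_betw_the_inv_into)
  then have "bij_betw (lab \<circ> the_inv_into II psi) EG {..<2*n*r}" using lab_bij by (rule bij_betw_trans)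
  moreover have "ff = lab \<circ> the_inv_into II psi" by (rule ext) (simp add: ff_def)
  ultimately show ?thesis by simp
qed

lemma card_EG: "card EG = 2*n*r" using ff_bij by (simp add: bij_betw_same_card)
lemma finite_EG: "finite EG" using ff_bij bij_betw_finite by blast

lemma ff_bij': "bij_betw ff (EG - {e0}) {1..card (EG - {e0})}"
proof -
  have inj: "inj_on ff EG" using ff_bij by (simp add: bij_betw_def)
  have "ff ` (EG - {e0}) = ff ` EG - ff ` {e0}" using inj e0_EG by (intro inj_on_image_set_diff) auto
  also have "\<dots> = {..<2*n*r} - {0}" using ff_bij ff_e0 by (simp add: bij_betw_def)
  also have "\<dots> = {1..card (EG - {e0})}" using card_EG e0_EG finite_EG n2 r1 by auto
  finally show ?thesis using inj by (simp add: bij_betw_def inj_on_diff)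
qed

lemma vs_eq: assumes "x < 2*n"
  shows "int (vertex_sum (EG - {e0}) ff x) = int Aconst + (if even x then 0 else int (hY 0 x) - int (hY r x))"
proof -
  have "vertex_sum (EG - {e0}) ff x = (\<Sum>E\<in>{E\<in>EG. x \<in> E}. ff E)"
    unfolding vertex_sum_def
    by (rule sum.mono_neutral_left) (use finite_EG ff_e0 in auto)
  also have "{E\<in>EG. x \<in> E} = psi ` {i\<in>II. x \<in> psi i}"
    using psi_bij by (auto simp: bij_betw_def)
  also have "(\<Sum>E\<in>psi ` {i\<in>II. x \<in> psi i}. ff E) = (\<Sum>i\<in>{i\<in>II. x \<in> psi i}. ff (psi i))"
    using psi_inj by (intro sum.reindex[unfolded comp_def]) (auto intro: inj_on_subset)
  also have "\<dots> = (\<Sum>i\<in>{i\<in>II. x \<in> psi i}. lab i)" by (intro sum.cong) (auto simp: ff_psi)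
  finally show ?thesis using vsum[OF assms] by simp
qed

lemma EG_parity: assumes "{x, y} \<in> EG" "x \<noteq> y" shows "x < 2*n \<and> y < 2*n \<and> (even x \<longleftrightarrow> odd y)"
proof -
  obtain u v i where E: "{x,y} = {u, v}" and uv: "u < 2*n" "v < 2*n" and i: "i < r"
    and c: "(int u - int v) mod NN = g i mod NN \<or> (int u - int v) mod NN = (- g i) mod NN"
    using assms(1) unfolding EG_def by (auto simp: cong_def NN_def)
  have "odd (g i mod NN)" "odd ((- g i) mod NN)" using gpos[OF i] NN_even by (simp_all add: even_mod_evenI)
  then have "odd ((int u - int v) mod NN)" using c by auto
  then have "odd (int u - int v)" using NN_even by (simp add: even_mod_evenI)
  then have "even u \<longleftrightarrow> odd v" by simp
  then show ?thesis using E uv by (auto simp: doubleton_eq_iff)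
qed

theorem main_constr:
  "local_antimagic (EG - {e0}) ff \<and> card (vertex_sum (EG - {e0}) ff ` {0..<2*n}) = 3"
proof -
  let ?vs = "vertex_sum (EG - {e0}) ff"
  have ev: "\<And>x. x < 2*n \<Longrightarrow> even x \<Longrightarrow> int (?vs x) = int Aconst" using vs_eq by simp
  have od: "\<And>x. x < 2*n \<Longrightarrow> odd x \<Longrightarrow> int (?vs x) = int Aconst - tt \<or> int (?vs x) = int Aconst + int n - tt"
    using vs_eq D_vals by fastforce
  have la: "local_antimagic (EG - {e0}) ff"
    unfolding local_antimagic_def
  proof (intro conjI allI impI)
    show "bij_betw ff (EG - {e0}) {1..card (EG - {e0})}" by (rule ff_bij')
  next
    fix x y assume "{x, y} \<in> EG - {e0}" "x \<noteq> y"
    then have p: "x < 2*n" "y < 2*n" "even x \<longleftrightarrow> odd y" using EG_parity by auto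
    show "?vs x \<noteq> ?vs y"
    proof (cases "even x")
      case True
      then show ?thesis using ev[of x] od[of y] p tt_bounds by auto
    next
      case False
      then show ?thesis using ev[of y] od[of x] p tt_bounds by auto
    qed
  qed
  obtain x1 where x1: "x1 < 2*n" "odd x1" "int (hY 0 x1) - int (hY r x1) = - tt" using D_att1 by blast
  obtain x2 where x2: "x2 < 2*n" "odd x2" "int (hY 0 x2) - int (hY r x2) = int n - tt" using D_att2 by blast
  have v1: "int (?vs x1) = int Aconst - tt" using vs_eq[OF x1(1)] x1 by simp
  have v2: "int (?vs x2) = int Aconst + int n - tt" using vs_eq[OF x2(1)] x2 by simp
  have v0: "?vs 0 = Aconst" using ev[of 0] n2 by simp
  have img: "?vs ` {0..<2*n} = {Aconst, ?vs x1, ?vs x2}"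
  proof
    show "?vs ` {0..<2*n} \<subseteq> {Aconst, ?vs x1, ?vs x2}"
    proof
      fix b assume "b \<in> ?vs ` {0..<2*n}"
      then obtain x where x: "x < 2*n" "b = ?vs x" by auto
      show "b \<in> {Aconst, ?vs x1, ?vs x2}"
      proof (cases "even x")
        case True then show ?thesis using ev[OF x(1)] x by simp
      next
        case False
        then have "int b = int (?vs x1) \<or> int b = int (?vs x2)" using od[OF x(1)] x v1 v2 by auto
        then show ?thesis by auto
      qed
    qed
  next
    show "{Aconst, ?vs x1, ?vs x2} \<subseteq> ?vs ` {0..<2*n}"
      using x1(1) x2(1) n2 v0 by (auto intro!: image_eqI[of _ _ 0])
  qed
  have "Aconst \<noteq> ?vs x1" "Aconst \<noteq> ?vs x2" "?vs x1 \<noteq> ?vs x2"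
    using v1 v2 tt_bounds by auto
  then have "card (?vs ` {0..<2*n}) = 3" using img by simp
  then show ?thesis using la by simp
qed

end
lemma circ_parity:
  assumes "\<forall>s\<in>set S. odd s" "{x, y} \<in> circulant_edges (2*n) S" "x \<noteq> y"
  shows "x < 2*n \<and> y < 2*n \<and> (even x \<longleftrightarrow> odd y)"
proof -
  obtain u v s where E: "{x,y} = {u, v}" and uv: "u < 2*n" "v < 2*n" and s: "s \<in> set S"
    and c: "(int u - int v) mod (2 * int n) = s mod (2 * int n) \<or> (int u - int v) mod (2 * int n) = (- s) mod (2 * int n)"
    using assms(2) unfolding circulant_edges_def by (auto simp: cong_def)
  have "odd (s mod (2 * int n))" "odd ((- s) mod (2 * int n))" using assms(1) s by (simp_all add: even_mod_evenI)
  then have "odd ((int u - int v) mod (2 * int n))" using c by auto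
  then have "odd (int u - int v)" by (simp add: even_mod_evenI)
  then have "even u \<longleftrightarrow> odd v" by simp
  then show ?thesis using E uv by (auto simp: doubleton_eq_iff)
qed

lemma circ_elem:
  assumes "E \<in> circulant_edges m S" shows "\<exists>u v. E = {u, v} \<and> u < m \<and> v < m \<and> u \<noteq> v"
  using assms unfolding circulant_edges_def by blast

lemma circ_one:
  assumes "1 \<in> set S" "v < m" "m \<ge> 2"
  shows "{v, (v + 1) mod m} \<in> circulant_edges m S"
proof -
  have ne: "v \<noteq> (v + 1) mod m"
  proof
    assume h: "v = (v + 1) mod m"
    show False
    proof (cases "v + 1 < m")
      case True then show False using h by simp
    next
      case False then have "v + 1 = m" using assms(2) by simp
      then show False using h assms(3) by simp
    qed
  qed
  have "(int v - int ((v + 1) mod m)) mod int m = (int v - (int v + 1)) mod int m"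
    by (simp add: of_nat_mod mod_diff_right_eq)
  then have "[int v - int ((v + 1) mod m) = - 1] (mod int m)" by (simp add: cong_def)
  then show ?thesis unfolding circulant_edges_def using assms ne
    by (intro CollectI exI[of _ v] exI[of _ "(v+1) mod m"]) force
qed

lemma card_evens: "card {v\<in>{0..<2*n}. even v} = n"
proof -
  have "{v\<in>{0..<2*n}. even v} = (\<lambda>i. 2*i) ` {..<n}" by (auto elim!: evenE)
  moreover have "inj_on (\<lambda>i::nat. 2*i) {..<n}" by (auto simp: inj_on_def)
  ultimately show ?thesis by (simp add: card_image)
qed

lemma card_odds: "card {v\<in>{0..<2*n}. odd v} = n"
proof -
  have "{v\<in>{0..<2*n}. odd v} = (\<lambda>i. 2*i+1) ` {..<n}" by (auto elim!: oddE)
  moreover have "inj_on (\<lambda>i::nat. 2*i+1) {..<n}" by (auto simp: inj_on_def)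
  ultimately show ?thesis by (simp add: card_image)
qed



lemma double_count:
  assumes S: "\<forall>s\<in>set S. odd s" and sub: "E' \<subseteq> circulant_edges (2*n) S" and fin: "finite E'"
    and b: "b = True \<or> b = False"
  shows "(\<Sum>v\<in>{v\<in>{0..<2*n}. even v = b}. vertex_sum E' f v) = (\<Sum>E\<in>E'. f E)"
proof -
  have "(\<Sum>v\<in>{v\<in>{0..<2*n}. even v = b}. vertex_sum E' f v)
      = (\<Sum>v\<in>{v\<in>{0..<2*n}. even v = b}. \<Sum>E\<in>{E\<in>E'. v \<in> E}. f E)"
    by (simp add: vertex_sum_def)
  also have "\<dots> = (\<Sum>E\<in>E'. \<Sum>v\<in>{v\<in>{v\<in>{0..<2*n}. even v = b}. v \<in> E}. f E)"
    using fin by (intro sum.swap_restrict) auto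
  also have "\<dots> = (\<Sum>E\<in>E'. f E)"
  proof (rule sum.cong[OF refl])
    fix E assume "E \<in> E'"
    then have EE: "E \<in> circulant_edges (2*n) S" using sub by auto
    then obtain x y where E: "E = {x, y}" "x \<noteq> y" using circ_elem by blast
    then have p: "x < 2*n \<and> y < 2*n \<and> (even x \<longleftrightarrow> odd y)" using circ_parity[OF S] EE by blast
    have "{v\<in>{v\<in>{0..<2*n}. even v = b}. v \<in> E} = (if even x = b then {x} else {y})"
      using p E by auto
    then show "(\<Sum>v\<in>{v\<in>{v\<in>{0..<2*n}. even v = b}. v \<in> E}. f E) = f E" by simp
  qed
  finally show ?thesis .
qed


lemma three_vals:
  fixes F :: "nat \<Rightarrow> nat"
  assumes "finite A" "card A \<le> 2" "a \<in> A" "b \<in> A" "c \<in> A" "a \<noteq> b" "b \<noteq> c" shows "c = a"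
proof (rule ccontr)
  assume "c \<noteq> a"
  then have "card {a, b, c} = 3" using assms by auto
  moreover have "card {a, b, c} \<le> card A" using assms by (intro card_mono) auto
  ultimately show False using assms(2) by simp
qed

lemma lower_bound:
  fixes n :: nat and S :: "int list"
  assumes n2: "n \<ge> 2" and S: "\<forall>s\<in>set S. odd s" and one: "1 \<in> set S"
    and la: "local_antimagic (circulant_edges (2*n) S - {e}) f"
  shows "3 \<le> card (vertex_sum (circulant_edges (2*n) S - {e}) f ` {0..<2*n})"
proof (rule ccontr)
  define N where "N = 2*n"
  define E' where "E' = circulant_edges (2*n) S - {e}"
  define F where "F = vertex_sum E' f"
  assume "\<not> 3 \<le> card (vertex_sum (circulant_edges (2*n) S - {e}) f ` {0..<2*n})"
  then have c2: "card (F ` {0..<N}) \<le> 2" by (simp add: F_def E'_def N_def)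
  have N4: "N \<ge> 4" using n2 by (simp add: N_def)
  have adj: "\<And>x y. {x, y} \<in> E' \<Longrightarrow> x \<noteq> y \<Longrightarrow> F x \<noteq> F y"
    using la by (simp add: local_antimagic_def F_def E'_def)
  define k where "k = (if \<exists>k<N. e = {k, (k+1) mod N} then (SOME k. k < N \<and> e = {k, (k+1) mod N}) else 0)"
  have kN: "k < N" using N4 by (auto simp: k_def intro: someI2_ex)
  have notk: "\<And>v. v < N \<Longrightarrow> v \<noteq> k \<Longrightarrow> {v, (v+1) mod N} \<noteq> e"
  proof
    fix v assume v: "v < N" "v \<noteq> k" "{v, (v+1) mod N} = e"
    then have ex: "\<exists>k. k < N \<and> e = {k, (k+1) mod N}" by auto
    then have kk: "k = (SOME k. k < N \<and> e = {k, (k+1) mod N})" by (simp add: k_def)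
    have ke: "e = {k, (k+1) mod N}" using someI_ex[OF ex] unfolding kk[symmetric] by simp
    have "{v, (v+1) mod N} = {k, (k+1) mod N}" using v ke by simp
    then have "(v = k \<and> (v+1) mod N = (k+1) mod N) \<or> (v = (k+1) mod N \<and> (v+1) mod N = k)"
      by (simp add: doubleton_eq_iff)
    then have vk: "v = (k+1) mod N" and vk2: "(v+1) mod N = k" using v(2) by auto
    have "((k+1) mod N + 1) mod N = (k + 1 + 1) mod N" by (rule mod_add_left_eq)
    then have k2: "(k + 2) mod N = k" using vk vk2 by simp
    show False
    proof (cases "k + 2 < N")
      case True then show False using k2 by simp
    next
      case False
      then have "(k + 2) mod N = (k + 2 - N) mod N" by (simp add: le_mod_geq)
      also have "\<dots> = k + 2 - N" using kN N4 by simp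
      finally show False using k2 kN N4 by simp
    qed
  qed
  define vv where "vv i = (k + 1 + i) mod N" for i
  have vvN: "\<And>i. vv i < N" using N4 by (simp add: vv_def)
  have vvS: "\<And>i. vv (Suc i) = (vv i + 1) mod N" by (simp add: vv_def mod_Suc_eq)
  have vvk: "\<And>i. i + 1 < N \<Longrightarrow> vv i \<noteq> k"
  proof
    fix i assume i: "i + 1 < N" and h: "vv i = k"
    show False
    proof (cases "k + 1 + i < N")
      case True then show False using h by (simp add: vv_def)
    next
      case False
      then have "(k + 1 + i) mod N = k + 1 + i - N" using kN i by (simp add: le_mod_geq)
      then show False using h i kN by (simp add: vv_def)
    qed
  qed
  have step: "\<And>i. i + 1 < N \<Longrightarrow> F (vv i) \<noteq> F (vv (Suc i))"
  proof -
    fix i assume i: "i + 1 < N"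
    have "{vv i, (vv i + 1) mod N} \<in> circulant_edges (2*n) S" using circ_one[OF one vvN] N4 by (simp add: N_def)
    moreover have "{vv i, (vv i + 1) mod N} \<noteq> e" using notk[OF vvN vvk[OF i]] .
    ultimately have "{vv i, vv (Suc i)} \<in> E'" by (simp add: E'_def vvS)
    moreover have "vv i \<noteq> vv (Suc i)"
    proof
      assume "vv i = vv (Suc i)"
      then have "vv i = (vv i + 1) mod N" by (simp add: vvS)
      then show False using vvN[of i] N4
        by (cases "vv i + 1 < N") (simp_all add: le_mod_geq)
    qed
    ultimately show "F (vv i) \<noteq> F (vv (Suc i))" using adj by blast
  qed
  have finF: "finite (F ` {0..<N})" by simp
  have inF: "\<And>i. F (vv i) \<in> F ` {0..<N}" using vvN by auto
  have alt: "\<And>i. i < N \<Longrightarrow> F (vv i) = (if even i then F (vv 0) else F (vv 1))"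
  proof -
    fix i show "i < N \<Longrightarrow> F (vv i) = (if even i then F (vv 0) else F (vv 1))"
    proof (induction i rule: less_induct)
      case (less i)
      show ?case
      proof (cases "i < 2")
        case True then show ?thesis by (cases i) (auto simp: numeral_2_eq_2 less_Suc_eq)
      next
        case False
        then obtain j where j: "i = Suc (Suc j)" by (metis add_2_eq_Suc' le_add_diff_inverse2 not_less)
        have a: "F (vv j) \<noteq> F (vv (Suc j))" using step[of j] less.prems j by simp
        have b: "F (vv (Suc j)) \<noteq> F (vv i)" using step[of "Suc j"] less.prems j by simp
        have "F (vv i) = F (vv j)" using three_vals[OF finF c2 inF inF inF a b] .
        then show ?thesis using less.IH[of j] less.prems j by simp
      qed
    qed
  qed
  define cE where "cE = (if even (k+1) then F (vv 0) else F (vv 1))"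
  define cO where "cO = (if even (k+1) then F (vv 1) else F (vv 0))"
  have neq: "cE \<noteq> cO" using step[of 0] N4 by (auto simp: cE_def cO_def)
  have Fv: "\<And>v. v < N \<Longrightarrow> F v = (if even v then cE else cO)"
  proof -
    fix v assume v: "v < N"
    define i where "i = (v + N - (k+1)) mod N"
    have iN: "i < N" using N4 by (simp add: i_def)
    have "vv i = (k + 1 + (v + N - (k+1)) mod N) mod N" by (simp only: vv_def i_def)
    also have "\<dots> = (k + 1 + (v + N - (k+1))) mod N" by (rule mod_add_right_eq)
    also have "k + 1 + (v + N - (k+1)) = v + N" using kN by simp
    finally have vi: "vv i = v" using v by simp
    have evN: "even N" by (simp add: N_def)
    have "i mod 2 = (v + N - (k+1)) mod 2" using evN by (simp add: i_def mod_mod_cancel)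
    then have "even i \<longleftrightarrow> even (v + N - (k+1))" by (simp add: even_iff_mod_2_eq_zero)
    also have "\<dots> \<longleftrightarrow> (even v \<longleftrightarrow> even (k+1))" using kN evN by (auto simp: even_diff_nat)
    finally have pi: "even i \<longleftrightarrow> (even v \<longleftrightarrow> even (k+1))" .
    show "F v = (if even v then cE else cO)" using alt[OF iN] vi pi by (auto simp: cE_def cO_def)
  qed
  have fin: "finite (circulant_edges (2*n) S)"
  proof -
    have "circulant_edges (2*n) S \<subseteq> Pow {..<2*n}" unfolding circulant_edges_def by auto
    then show ?thesis by (rule finite_subset) simp
  qed
  have sE: "(\<Sum>v\<in>{v\<in>{0..<2*n}. even v = True}. F v) = (\<Sum>E\<in>E'. f E)"
    unfolding F_def E'_def by (rule double_count[OF S]) (use fin in auto)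
  have sO: "(\<Sum>v\<in>{v\<in>{0..<2*n}. even v = False}. F v) = (\<Sum>E\<in>E'. f E)"
    unfolding F_def E'_def by (rule double_count[OF S]) (use fin in auto)
  have "(\<Sum>v\<in>{v\<in>{0..<2*n}. even v = True}. F v) = n * cE"
  proof -
    have "(\<Sum>v\<in>{v\<in>{0..<2*n}. even v = True}. F v) = (\<Sum>v\<in>{v\<in>{0..<2*n}. even v}. cE)"
      by (intro sum.cong) (auto simp: Fv N_def)
    then show ?thesis using card_evens[of n] by simp
  qed
  moreover have "(\<Sum>v\<in>{v\<in>{0..<2*n}. even v = False}. F v) = n * cO"
  proof -
    have "(\<Sum>v\<in>{v\<in>{0..<2*n}. even v = False}. F v) = (\<Sum>v\<in>{v\<in>{0..<2*n}. odd v}. cO)"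
      by (intro sum.cong) (auto simp: Fv N_def)
    then show ?thesis using card_odds[of n] by simp
  qed
  ultimately have "n * cE = n * cO" using sE sO by simp
  then show False using neq n2 by simp
qed


lemma cop_dvd: "coprime (x::int) m \<Longrightarrow> x dvd m \<Longrightarrow> 1 < x \<Longrightarrow> False"
proof -
  assume a: "coprime x m" "x dvd m" "1 < x"
  have "is_unit x" using coprime_common_divisor[OF a(1) dvd_refl a(2)] .
  then show False using a(3) by simp
qed

lemma cop_odd: "coprime (x::int) (2 * int n) \<Longrightarrow> odd x"
  by (metis coprime_mult_right_iff coprime_right_2_iff_odd)

lemma exists_eps:
  fixes g :: "nat \<Rightarrow> int" and r n :: nat and sig :: int
  assumes r1: "r \<ge> 1" and sig: "sig = 1 \<or> sig = -1" and g0: "0 < g 0" "g 0 < int n"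
    and H: "r \<ge> 2 \<Longrightarrow> \<not> int n dvd 2 * g 1"
  shows "\<exists>eps. (\<forall>i. eps i = 1 \<or> eps i = -1) \<and> eps 0 = sig \<and> \<not> int n dvd (\<Sum>i<r. eps i * g i)"
proof (cases "r = 1")
  case True
  have "\<not> int n dvd sig * g 0"
  proof
    assume "int n dvd sig * g 0"
    then have "int n dvd g 0" using sig by (auto simp: dvd_minus_iff)
    then have "int n \<le> g 0" using g0 by (simp add: zdvd_imp_le)
    then show False using g0 by simp
  qed
  then show ?thesis using True sig by (intro exI[of _ "\<lambda>_. sig"]) auto
next
  case False
  then have r2: "r \<ge> 2" using r1 by simp
  define e0 where "e0 = (\<lambda>i::nat. if i = 0 then sig else 1)"
  define e1 where "e1 = e0(1 := -1)"
  have "(\<Sum>i<r. e1 i * g i) - (\<Sum>i<r. e0 i * g i) = (\<Sum>i<r. (e1 i - e0 i) * g i)"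
    by (simp add: sum_subtractf[symmetric] algebra_simps)
  also have "\<dots> = (\<Sum>i<r. if i = 1 then -2 * g 1 else 0)"
    by (intro sum.cong) (auto simp: e1_def e0_def)
  also have "\<dots> = -2 * g 1" using r2 by (simp add: sum.delta)
  finally have d: "(\<Sum>i<r. e1 i * g i) - (\<Sum>i<r. e0 i * g i) = -2 * g 1" .
  show ?thesis
  proof (cases "int n dvd (\<Sum>i<r. e0 i * g i)")
    case True
    have "\<not> int n dvd (\<Sum>i<r. e1 i * g i)"
    proof
      assume "int n dvd (\<Sum>i<r. e1 i * g i)"
      then have "int n dvd (\<Sum>i<r. e1 i * g i) - (\<Sum>i<r. e0 i * g i)" using True by (rule dvd_diff)
      then have "int n dvd - (2 * g 1)" using d by simp
      then show False using H[OF r2] by (simp only: dvd_minus_iff)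
    qed
    then show ?thesis using sig by (intro exI[of _ e1]) (auto simp: e1_def e0_def)
  next
    case False
    then show ?thesis using sig by (intro exI[of _ e0]) (auto simp: e0_def)
  qed
qed

theorem mainTheorem8:
  fixes n :: nat and a :: "int list" and e :: "nat set"
  assumes "n \<ge> 2"
    and "sorted_wrt (<) a"
    and "\<forall>x\<in>set a. 1 < x \<and> x < int n \<and> coprime x (2 * int n)"
    and "e \<in> circulant_edges (2 * n) (1 # a)"
  shows "chi_la {0..<2 * n} (circulant_edges (2 * n) (1 # a) - {e}) = 3"
proof -
  note n2 = assms(1)
  define S where "S = 1 # a"
  define r where "r = length S"
  define E where "E = circulant_edges (2 * n) S"
  have r1: "r \<ge> 1" by (simp add: r_def S_def)
  have Sodd: "\<forall>s\<in>set S. odd s"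
  proof
    fix s assume "s \<in> set S"
    then have "s = 1 \<or> s \<in> set a" by (simp add: S_def)
    then show "odd s"
    proof
      assume "s \<in> set a"
      then have "coprime s (2 * int n)" using assms(3) by blast
      then show "odd s" by (rule cop_odd)
    qed simp
  qed
  have Sone: "1 \<in> set S" by (simp add: S_def)
  have Sb: "\<And>s. s \<in> set S \<Longrightarrow> 0 < s \<and> s < int n"
  proof -
    fix s assume "s \<in> set S"
    then have "s = 1 \<or> s \<in> set a" by (simp add: S_def)
    then show "0 < s \<and> s < int n"
    proof
      assume "s \<in> set a"
      then have "1 < s \<and> s < int n" using assms(3) by blast
      then show ?thesis by simp
    qed (use n2 in simp)
  qed
  have dS: "distinct S"
  proof -
    have "distinct a" using assms(2) by (simp add: strict_sorted_iff)
    moreover have "1 \<notin> set a"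
    proof
      assume "1 \<in> set a"
      then have "1 < (1::int)" using assms(3) by blast
      then show False by simp
    qed
    ultimately show ?thesis by (simp add: S_def)
  qed
  obtain u0 v0 s0 where e: "e = {u0, v0}" and uv0: "u0 < 2*n" "v0 < 2*n" "u0 \<noteq> v0" and s0: "s0 \<in> set S"
    and c0: "(int u0 - int v0) mod (2 * int n) = s0 mod (2 * int n) \<or> (int u0 - int v0) mod (2 * int n) = (- s0) mod (2 * int n)"
    using assms(4) unfolding circulant_edges_def S_def[symmetric] by (auto simp: cong_def)
  have par0: "even u0 \<longleftrightarrow> odd v0"
    using circ_parity[OF Sodd, of u0 v0 n] assms(4) e uv0 by (simp add: S_def)
  obtain xe we where xw: "e = {xe, we}" "even xe" "odd we" "xe < 2*n" "we < 2*n"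
    "(int we - int xe) mod (2 * int n) = s0 mod (2 * int n) \<or> (int we - int xe) mod (2 * int n) = (- s0) mod (2 * int n)"
  proof (cases "even u0")
    case True
    have "(int v0 - int u0) mod (2 * int n) = (- s0) mod (2 * int n) \<or> (int v0 - int u0) mod (2 * int n) = s0 mod (2 * int n)"
      using c0 by (smt (verit) mod_minus_eq)
    then show ?thesis using that[of u0 v0] True par0 e uv0 by blast
  next
    case False
    then show ?thesis using that[of v0 u0] par0 e uv0 c0 by (auto simp: insert_commute)
  qed
  obtain sig where sig: "sig = 1 \<or> sig = -1" "(int we - int xe) mod (2 * int n) = (sig * s0) mod (2 * int n)"
    using xw(6) by (metis mult_1 mult_minus1)
  obtain js where js: "js < r" "S ! js = s0" using s0 by (auto simp: in_set_conv_nth r_def)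
  define pm where "pm i = (if i = 0 then js else if i = js then 0 else i)" for i
  have pm_lt: "\<And>i. i < r \<Longrightarrow> pm i < r" using js r1 by (auto simp: pm_def)
  have pm_inv: "\<And>i. pm (pm i) = i" by (auto simp: pm_def)
  define g where "g i = S ! (pm i)" for i
  have g0: "g 0 = s0" using js by (simp add: g_def pm_def)
  have gS: "\<And>i. i < r \<Longrightarrow> g i \<in> set S" using pm_lt by (simp add: g_def r_def)
  have Sg: "\<And>s. s \<in> set S \<Longrightarrow> \<exists>i<r. g i = s"
  proof -
    fix s assume "s \<in> set S"
    then obtain j where j: "j < r" "S ! j = s" by (auto simp: in_set_conv_nth r_def)
    then have "pm j < r" "g (pm j) = s" using pm_lt pm_inv by (auto simp: g_def)
    then show "\<exists>i<r. g i = s" by blast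
  qed
  have ginj: "inj_on g {..<r}"
  proof (rule inj_onI)
    fix i1 i2 assume "i1 \<in> {..<r}" "i2 \<in> {..<r}" "g i1 = g i2"
    then have "pm i1 = pm i2" using pm_lt dS by (simp add: g_def nth_eq_iff_index_eq r_def)
    then show "i1 = i2" using pm_inv by metis
  qed
  have gpos: "\<And>i. i < r \<Longrightarrow> 0 < g i \<and> g i < int n \<and> odd (g i)" using gS Sb Sodd by blast
  have H: "r \<ge> 2 \<Longrightarrow> \<not> int n dvd 2 * g 1"
  proof
    assume r2: "r \<ge> 2" and dv: "int n dvd 2 * g 1"
    have g1: "0 < g 1" "g 1 < int n" "g 1 \<in> set S" using gpos[of 1] gS[of 1] r2 by auto
    have "int n dvd 2 * g 1 - int n" using dv by (simp add: dvd_diff)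
    moreover have "\<bar>2 * g 1 - int n\<bar> < int n" using g1 by simp
    ultimately have "2 * g 1 - int n = 0" using dvd_small0 by blast
    then have n2g: "int n = 2 * g 1" by simp
    show False
    proof (cases "g 1 = 1")
      case True
      have "a \<noteq> []" using r2 by (auto simp: r_def S_def)
      then obtain x where "x \<in> set a" by (cases a) auto
      then have "1 < x" "x < int n" using assms(3) by auto
      then show False using n2g True by simp
    next
      case False
      then have "g 1 \<in> set a" using g1 by (simp add: S_def)
      then have "coprime (g 1) (2 * int n)" "1 < g 1" using assms(3) by auto
      moreover have "g 1 dvd 2 * int n" using n2g by simp
      ultimately show False using cop_dvd by blast
    qed
  qed
  obtain eps where eps: "\<forall>i. eps i = 1 \<or> eps i = -1" "eps 0 = sig" "\<not> int n dvd (\<Sum>i<r. eps i * g i)"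
    using exists_eps[OF r1 sig(1), of g n] gpos[OF r1[unfolded One_nat_def Suc_le_eq]] H by auto
  interpret C: lconstr n r g eps "int we"
    by unfold_locales (use n2 r1 gpos ginj eps xw in auto)
  have EGE: "C.EG = E"
  proof -
    have key: "\<And>u v. (\<exists>i<r. [int u - int v = g i] (mod int (2*n)) \<or> [int u - int v = - g i] (mod int (2*n)))
        \<longleftrightarrow> (\<exists>s\<in>set S. [int u - int v = s] (mod int (2*n)) \<or> [int u - int v = - s] (mod int (2*n)))"
      using gS Sg by blast
    show ?thesis unfolding C.EG_def E_def circulant_edges_def by (simp only: key)
  qed
  have e0e: "C.e0 = e"
  proof -
    have t0: "C.tau 0 = sig * s0" using eps(2) g0 by (simp add: C.tau_def)
    have "C.XX 0 0 = (int we - sig * s0) mod C.NN" by (simp add: C.XX_def C.rho0 t0)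
    also have "\<dots> = int xe mod C.NN"
    proof -
      have "C.NN dvd (int we - int xe) - sig * s0" using sig(2) by (simp add: C.NN_def mod_eq_dvd_iff)
      then show ?thesis by (simp add: mod_eq_dvd_iff algebra_simps)
    qed
    also have "\<dots> = int xe" using xw(4) by (simp add: C.NN_def)
    finally have X: "C.XX 0 0 = int xe" .
    have Y: "C.YA 0 0 = int we" using xw(5) by (simp add: C.YA_def C.rho0 C.NN_def)
    show ?thesis using X Y xw(1) by (simp add: C.e0_def C.psi_def)
  qed
  have up: "local_antimagic (E - {e}) C.ff \<and> card (vertex_sum (E - {e}) C.ff ` {0..<2*n}) = 3"
    using C.main_constr EGE e0e by simp
  have low: "\<And>f. local_antimagic (E - {e}) f \<Longrightarrow> 3 \<le> card (vertex_sum (E - {e}) f ` {0..<2*n})"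
    unfolding E_def by (rule lower_bound[OF n2 Sodd Sone])
  have "chi_la {0..<2 * n} (E - {e}) = 3"
    unfolding chi_la_def Inf_nat_def
  proof (rule Least_equality)
    show "3 \<in> {card (vertex_sum (E - {e}) f ` {0..<2 * n}) |f. local_antimagic (E - {e}) f}"
      using up by force
  next
    fix y assume "y \<in> {card (vertex_sum (E - {e}) f ` {0..<2 * n}) |f. local_antimagic (E - {e}) f}"
    then show "3 \<le> y" using low by auto
  qed
  then show ?thesis by (simp add: E_def S_def)
qed

end
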